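(* Let $k\ge\ell\ge1$ be integers with $k+\ell\ge6$ and let $G$ be a finite digraph. For every $v\in V(G)$, $$s(v)\le\frac{1}{m+1}\left(\lambda_0\,\rho(v)^m+\lambda_1\,\rho(v)(1-\rho(v))^{m-1}\right).$$
   Context: Put $m=k+\ell$, $\lambda_0=k^k\ell^\ell/m^m$, $\lambda_1=k^k\ell(\ell-1)^{\ell-1}/(m-1)^{m-1}$ (with $0^0=1$). Digraphs are finite, without loops; $xy$ denotes an arc from $x$ to $y$; two vertices are adjacent if at least one of $xy,yx$ is an arc. The oriented star $S_{k,\ell}$ has a center $c$, a set $O$ of $k$ out-leaves and a set $I$ of $\ell$ in-leaves; its arcs are exactly $co$ ($o\in O$) and $ic$ ($i\in I$). For a digraph $G$ on $n$ vertices, let $\phi$ be a uniformly random map from $V(S_{k,\ell})$ to $V(G)$ (all $n^{m+1}$ maps equally likely), and let $\mathcal S$ be the set of maps $\phi$ that are isomorphisms from $S_{k,\ell}$ onto $G[\mathrm{Im}\,\phi]$ (in particular injective). $s(v)=\Pr[\phi\in\mathcal S\mid v\in\mathrm{Im}\,\phi]$. $\rho(v)$ is the number of vertices adjacent to $v$, divided by $n$. *)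

theory Defs
  imports Complex_Main "HOL-Library.FuncSet"
begin

definition digraph :: "'a set \<Rightarrow> ('a \<Rightarrow> 'a \<Rightarrow> bool) \<Rightarrow> bool" where
  "digraph V Arc \<longleftrightarrow> finite V \<and> (\<forall>x y. Arc x y \<longrightarrow> x \<in> V \<and> y \<in> V) \<and> (\<forall>x. \<not> Arc x x)"

text \<open>The oriented star S_{k,l} on vertex set {0..k+l}: centre 0, out-leaves 1..k,
in-leaves k+1..k+l.\<close>
definition star_arc :: "nat \<Rightarrow> nat \<Rightarrow> nat \<Rightarrow> nat \<Rightarrow> bool" where
  "star_arc k l x y \<longleftrightarrow> (x = 0 \<and> 1 \<le> y \<and> y \<le> k) \<or> (y = 0 \<and> k + 1 \<le> x \<and> x \<le> k + l)"

definition star_verts :: "nat \<Rightarrow> nat \<Rightarrow> nat set" where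
  "star_verts k l = {0..k + l}"

definition star_maps :: "nat \<Rightarrow> nat \<Rightarrow> 'a set \<Rightarrow> (nat \<Rightarrow> 'a) set" where
  "star_maps k l V = star_verts k l \<rightarrow>\<^sub>E V"

text \<open>phi is an isomorphism from S_{k,l} onto the induced subdigraph G[Im phi].\<close>
definition is_star_copy :: "('a \<Rightarrow> 'a \<Rightarrow> bool) \<Rightarrow> nat \<Rightarrow> nat \<Rightarrow> (nat \<Rightarrow> 'a) \<Rightarrow> bool" where
  "is_star_copy Arc k l \<phi> \<longleftrightarrow> inj_on \<phi> (star_verts k l) \<and>
     (\<forall>x\<in>star_verts k l. \<forall>y\<in>star_verts k l. Arc (\<phi> x) (\<phi> y) \<longleftrightarrow> star_arc k l x y)"

text \<open>s(v) = Pr[phi in S | v in Im phi] for phi uniform on all maps.\<close>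
definition s_val :: "'a set \<Rightarrow> ('a \<Rightarrow> 'a \<Rightarrow> bool) \<Rightarrow> nat \<Rightarrow> nat \<Rightarrow> 'a \<Rightarrow> real" where
  "s_val V Arc k l v =
     real (card {\<phi> \<in> star_maps k l V. is_star_copy Arc k l \<phi> \<and> v \<in> \<phi> ` star_verts k l})
     / real (card {\<phi> \<in> star_maps k l V. v \<in> \<phi> ` star_verts k l})"

definition rho :: "'a set \<Rightarrow> ('a \<Rightarrow> 'a \<Rightarrow> bool) \<Rightarrow> 'a \<Rightarrow> real" where
  "rho V Arc v = real (card {u \<in> V. Arc u v \<or> Arc v u}) / real (card V)"

text \<open>lambda_0 and lambda_1 (nat powers, so 0^0 = 1).\<close>
definition lambda0 :: "nat \<Rightarrow> nat \<Rightarrow> real" where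
  "lambda0 k l = real k ^ k * real l ^ l / real (k + l) ^ (k + l)"

definition lambda1 :: "nat \<Rightarrow> nat \<Rightarrow> real" where
  "lambda1 k l = real k ^ k * real l * real (l - 1) ^ (l - 1) / real (k + l - 1) ^ (k + l - 1)"

end

theory Submission
  imports Defs "HOL-Analysis.Analysis"
begin


definition ff :: "nat \<Rightarrow> nat \<Rightarrow> nat" where "ff p k = (\<Prod>i<k. p - i)"

lemma card_inj_funcset: "finite A \<Longrightarrow> finite C \<Longrightarrow> card {f \<in> A \<rightarrow>\<^sub>E C. inj_on f A} = ff (card C) (card A)"
  using card_inj_on_subset_funcset[of A C A] by (simp add: ff_def lessThan_atLeast0)

lemma count_gen:
  assumes "finite X1" "finite X2" "finite P" "finite Q"
    and S: "\<And>\<phi>. \<phi> \<in> S \<Longrightarrow> (\<forall>z. z \<notin> X1 \<union> X2 \<longrightarrow> \<phi> z = h z) \<and> inj_on \<phi> (X1 \<union> X2) \<and> \<phi> ` X1 \<subseteq> P \<and> \<phi> ` X2 \<subseteq> Q"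
  shows "card S \<le> ff (card P) (card X1) * ff (card Q) (card X2)"
proof -
  let ?f = "\<lambda>\<phi>. (restrict \<phi> X1, restrict \<phi> X2)"
  let ?B = "{g \<in> X1 \<rightarrow>\<^sub>E P. inj_on g X1} \<times> {g \<in> X2 \<rightarrow>\<^sub>E Q. inj_on g X2}"
  have inj: "inj_on ?f S"
  proof (rule inj_onI)
    fix \<phi> \<psi> assume a: "\<phi> \<in> S" "\<psi> \<in> S" "?f \<phi> = ?f \<psi>"
    show "\<phi> = \<psi>"
    proof
      fix z
      show "\<phi> z = \<psi> z"
      proof (cases "z \<in> X1 \<union> X2")
        case True then show ?thesis using a(3) by (auto simp: restrict_def fun_eq_iff split: if_splits; metis)
      next
        case False then show ?thesis using S[OF a(1)] S[OF a(2)] by auto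
      qed
    qed
  qed
  have sub: "?f ` S \<subseteq> ?B"
  proof
    fix y assume "y \<in> ?f ` S"
    then obtain \<phi> where "\<phi> \<in> S" "y = ?f \<phi>" by auto
    with S[OF this(1)] show "y \<in> ?B"
      by (auto simp: inj_on_def)
  qed
  have f1: "finite {g \<in> X1 \<rightarrow>\<^sub>E P. inj_on g X1}" by (rule finite_subset[OF _ finite_PiE[of X1 "\<lambda>_. P"]]) (use assms in auto)
  have f2: "finite {g \<in> X2 \<rightarrow>\<^sub>E Q. inj_on g X2}" by (rule finite_subset[OF _ finite_PiE[of X2 "\<lambda>_. Q"]]) (use assms in auto)
  have fin: "finite ?B" using f1 f2 by blast
  have "card S \<le> card ?B" by (rule card_inj_on_le[OF inj sub fin])
  also have "\<dots> = ff (card P) (card X1) * ff (card Q) (card X2)"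
    by (simp add: card_cartesian_product card_inj_funcset assms)
  finally show ?thesis .
qed



lemma sum_real_idx: "(\<Sum>i<k. real i) = real k * (real k - 1) / 2"
  by (induction k) (auto simp: field_simps)

lemma ff_zero: "p < k \<Longrightarrow> ff p k = 0"
  unfolding ff_def by (rule prod_zero) auto

lemma ff_real: "k \<le> p \<Longrightarrow> real (ff p k) = (\<Prod>i<k. (real p - real i))"
  unfolding ff_def by (simp add: of_nat_diff)

lemma sum_part:
  assumes "k \<le> p"
  shows "(\<Sum>i<k. (real p - real i) / real k) \<le> (if k = 0 then 0 else real p - (real k - 1) / 2)"
proof (cases "k = 0")
  case False
  have "(\<Sum>i<k. (real p - real i) / real k) = (real k * real p - (\<Sum>i<k. real i)) / real k"
    by (simp add: sum_divide_distrib[symmetric] sum_subtractf)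
  also have "\<dots> = real p - (real k - 1) / 2" using False by (simp add: sum_real_idx field_simps)
  finally show ?thesis using False by simp
qed simp

lemma prod_part:
  assumes "k \<le> p"
  shows "(\<Prod>i<k. (real p - real i) / real k) = real (ff p k) / real k ^ k"
  using assms by (simp add: ff_real prod_dividef)

lemma amgm_gen:
  fixes x :: "nat \<Rightarrow> real"
  assumes "m > 0" "\<And>i. i < m \<Longrightarrow> x i \<ge> 0"
  shows "(\<Prod>i<m. x i) \<le> ((\<Sum>i<m. x i) / m) ^ m"
proof -
  have pos: "(\<Prod>i<m. x i) \<ge> 0" by (intro prod_nonneg) (use assms in auto)
  have am: "(\<Prod>i<m. x i) powr (1 / m) \<le> (\<Sum>i<m. x i / card {..<m})"
    using arith_geom_mean[of "{..<m}" x] assms by auto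
  have "(\<Prod>i<m. x i) = ((\<Prod>i<m. x i) powr (1 / m)) ^ m"
  proof (cases "(\<Prod>i<m. x i) = 0")
    case True then show ?thesis using assms(1) by (simp only: True powr_0 zero_power)
  next
    case False
    then have "(\<Prod>i<m. x i) > 0" using pos by linarith
    then have y: "(\<Prod>i<m. x i) > 0" .
    have "((\<Prod>i<m. x i) powr (1 / m)) ^ m = ((\<Prod>i<m. x i) powr (1 / m)) powr (real m)"
      by (rule powr_realpow[symmetric]) (use y in \<open>simp only: powr_gt_zero; simp\<close>)
    also have "\<dots> = (\<Prod>i<m. x i) powr (1 / m * m)" by (simp add: powr_powr)
    also have "\<dots> = (\<Prod>i<m. x i)" using assms(1) y by simp
    finally show ?thesis by simp
  qed
  also have "\<dots> \<le> ((\<Sum>i<m. x i) / m) ^ m"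
    by (rule power_mono) (use am in \<open>simp_all add: sum_divide_distrib\<close>)
  finally show ?thesis .
qed

lemma ff_bound:
  fixes p q k l :: nat and T :: real
  assumes "k + l \<ge> 4" "T \<ge> 0" "real p + real q - 1 \<le> T"
  shows "real (ff p k * ff q l) \<le> real k ^ k * real l ^ l / real (k + l) ^ (k + l) * T ^ (k + l)"
proof (cases "p < k \<or> q < l")
  case True
  then have "ff p k * ff q l = 0" using ff_zero by auto
  moreover have "0 \<le> real k ^ k * real l ^ l / real (k + l) ^ (k + l) * T ^ (k + l)"
    using assms by (intro mult_nonneg_nonneg divide_nonneg_nonneg) auto
  ultimately show ?thesis by (metis of_nat_0 of_nat_mult)
next
  case False
  then have kp: "k \<le> p" and lq: "l \<le> q" by auto
  define m where "m = k + l"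
  define x where "x i = (if i < k then (real p - real i) / real k else (real q - real (i - k)) / real l)" for i
  have xnn: "x i \<ge> 0" if "i < m" for i
    using that kp lq by (auto simp: x_def m_def)
  have split_prod: "(\<Prod>i<m. x i) = (\<Prod>i<k. (real p - real i) / real k) * (\<Prod>j<l. (real q - real j) / real l)"
  proof -
    have "(\<Prod>i<m. x i) = (\<Prod>i<k. x i) * (\<Prod>i\<in>{k..<k+l}. x i)"
      unfolding m_def lessThan_atLeast0 by (rule prod.atLeastLessThan_concat[symmetric]) auto
    also have "(\<Prod>i\<in>{k..<k+l}. x i) = (\<Prod>j<l. x (j + k))"
      using prod.shift_bounds_nat_ivl[of x 0 k l] by (simp add: lessThan_atLeast0 add.commute)
    finally show ?thesis by (simp add: x_def)
  qed
  have split_sum: "(\<Sum>i<m. x i) = (\<Sum>i<k. (real p - real i) / real k) + (\<Sum>j<l. (real q - real j) / real l)"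
  proof -
    have "(\<Sum>i<m. x i) = (\<Sum>i<k. x i) + (\<Sum>i\<in>{k..<k+l}. x i)"
      unfolding m_def lessThan_atLeast0 by (rule sum.atLeastLessThan_concat[symmetric]) auto
    also have "(\<Sum>i\<in>{k..<k+l}. x i) = (\<Sum>j<l. x (j + k))"
      using sum.shift_bounds_nat_ivl[of x 0 k l] by (simp add: lessThan_atLeast0 add.commute)
    finally show ?thesis by (simp add: x_def)
  qed
  have kl4: "real k + real l \<ge> 4" using assms(1) by linarith
  have M: "(\<Sum>i<m. x i) \<le> T"
  proof -
    have "real p \<ge> 0" "real q \<ge> 0" by auto
    show ?thesis
    proof (cases "k = 0")
      case True
      then have l4: "real l \<ge> 4" using kl4 by simp
      have qT: "real q - (real l - 1) / 2 \<le> T" using l4 assms(3) \<open>real p \<ge> 0\<close> by (simp add: field_simps)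
      moreover have "(\<Sum>i<l. (real q - real i) / real l) \<le> real q - (real l - 1) / 2"
        using sum_part[OF lq] True kl4 by (simp split: if_splits)
      moreover have "(\<Sum>i<k. (real p - real i) / real k) = 0" using True by simp
      ultimately have "(\<Sum>i<l. (real q - real i) / real l) \<le> T" 
        by (intro order_trans[OF \<open>(\<Sum>i<l. (real q - real i) / real l) \<le> real q - (real l - 1) / 2\<close> qT])
      then show ?thesis using True unfolding split_sum by simp
    next
      case k0: False
      show ?thesis
      proof (cases "l = 0")
        case True
        then have k4: "real k \<ge> 4" using kl4 by simp
        have pT: "real p - (real k - 1) / 2 \<le> T" using k4 assms(3) \<open>real q \<ge> 0\<close> by (simp add: field_simps)
        moreover have "(\<Sum>i<k. (real p - real i) / real k) \<le> real p - (real k - 1) / 2"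
          using sum_part[OF kp] k0 by (simp split: if_splits)
        moreover have "(\<Sum>i<l. (real q - real i) / real l) = 0" using True by simp
        ultimately have "(\<Sum>i<k. (real p - real i) / real k) \<le> T" 
          by (intro order_trans[OF \<open>(\<Sum>i<k. (real p - real i) / real k) \<le> real p - (real k - 1) / 2\<close> pT])
        then show ?thesis using True unfolding split_sum by simp
      next
        case False
        have c: "real p - (real k - 1) / 2 + (real q - (real l - 1) / 2) \<le> T"
          using kl4 assms(3) by (simp add: field_simps)
        have a1: "(\<Sum>i<k. (real p - real i) / real k) \<le> real p - (real k - 1) / 2"
          using sum_part[OF kp] k0 by (simp split: if_splits)
        have a2: "(\<Sum>i<l. (real q - real i) / real l) \<le> real q - (real l - 1) / 2"
          using sum_part[OF lq] False by (simp split: if_splits)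
        show ?thesis unfolding split_sum by (rule order_trans[OF add_mono[OF a1 a2] c])
      qed
    qed
  qed
  have Mnn: "(\<Sum>i<m. x i) \<ge> 0" by (intro sum_nonneg) (use xnn in auto)
  have mpos: "m > 0" using assms(1) unfolding m_def by linarith
  have "real (ff p k) / real k ^ k * (real (ff q l) / real l ^ l) \<le> ((\<Sum>i<m. x i) / m) ^ m"
  proof -
    have A: "(\<Prod>i<m. x i) \<le> ((\<Sum>i<m. x i) / m) ^ m" by (rule amgm_gen[OF mpos]) (rule xnn)
    have "real (ff p k) / real k ^ k * (real (ff q l) / real l ^ l) = (\<Prod>i<m. x i)"
      by (simp only: split_prod prod_part[OF kp] prod_part[OF lq])
    then show ?thesis using A by simp
  qed
  also have "\<dots> \<le> (T / m) ^ m"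
    by (rule power_mono[OF divide_right_mono[OF M]]) (use Mnn in simp_all)
  finally have *: "real (ff p k) / real k ^ k * (real (ff q l) / real l ^ l) \<le> (T / m) ^ m" .
  have kk: "real k ^ k > 0" by (cases "k = 0") simp_all
  have ll: "real l ^ l > 0" by (cases "l = 0") simp_all
  have "real (ff p k * ff q l) = real k ^ k * real l ^ l * (real (ff p k) / real k ^ k * (real (ff q l) / real l ^ l))"
    using kk ll by simp
  also have "\<dots> \<le> real k ^ k * real l ^ l * (T / m) ^ m"
    by (rule mult_left_mono[OF *]) (simp)
  also have "\<dots> = real k ^ k * real l ^ l / real (k + l) ^ (k + l) * T ^ (k + l)"
    by (simp add: m_def power_divide)
  finally show ?thesis .
qed



lemma bern_aux: "(a::real) \<ge> 0 \<Longrightarrow> (a + 1) ^ j * (a - real j) \<le> a ^ (j + 1)"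
proof (induction j)
  case 0 then show ?case by simp
next
  case (Suc j)
  have "(a + 1) ^ Suc j * (a - real (Suc j)) = (a + 1) ^ j * ((a + 1) * (a - real j - 1))" by (simp add: algebra_simps)
  also have "\<dots> \<le> (a + 1) ^ j * (a * (a - real j))"
  proof (rule mult_left_mono)
    show "(a + 1) * (a - real j - 1) \<le> a * (a - real j)" by (simp add: algebra_simps)
  qed (use Suc.prems in simp)
  also have "\<dots> = a * ((a + 1) ^ j * (a - real j))" by (simp add: algebra_simps)
  also have "\<dots> \<le> a * a ^ (j + 1)" by (rule mult_left_mono[OF Suc.IH[OF Suc.prems] Suc.prems])
  finally show ?case by simp
qed

lemma step_ineq:
  assumes "x \<ge> (1::nat)"
  shows "real x ^ x * real x ^ (x - 1) \<le> real (x - 1) ^ (x - 1) * real (x + 1) ^ x"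
proof (cases "x = 1")
  case True then show ?thesis by simp
next
  case False
  with assms have x2: "x \<ge> 2" by simp
  define a where "a = real x ^ 2 - 1"
  have a0: "a \<ge> 0" using x2 by (simp add: a_def)
  have B: "(a + 1) ^ (x - 1) * (a - real (x - 1)) \<le> a ^ (x - 1 + 1)" by (rule bern_aux[OF a0])
  have q1: "a + 1 = real x ^ 2" by (simp add: a_def)
  have q2: "a - real (x - 1) = real x * (real x - 1)" using x2 by (simp add: a_def of_nat_diff power2_eq_square algebra_simps)
  have q3: "a = (real x - 1) * (real x + 1)" by (simp add: a_def power2_eq_square algebra_simps)
  have q4: "x - 1 + 1 = x" using x2 by simp
  have I: "(real x ^ 2) ^ (x - 1) * (real x * (real x - 1)) \<le> ((real x - 1) * (real x + 1)) ^ x"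
    using B unfolding q1 q2 q4 unfolding q3 .
  have e1: "(real x ^ 2) ^ (x - 1) * (real x * (real x - 1)) = (real x ^ x * real x ^ (x - 1)) * (real x - 1)"
  proof -
    obtain y where y: "x = Suc y" using x2 by (cases x) auto
    have s1: "real x ^ (x - 1) * real x = real x ^ x" unfolding y by (simp add: power_Suc2)
    have s2: "(real x ^ 2) ^ (x - 1) = real x ^ (x - 1) * real x ^ (x - 1)" by (simp add: power2_eq_square power_mult_distrib)
    have "(real x ^ 2) ^ (x - 1) * real x = real x ^ x * real x ^ (x - 1)"
      unfolding s2 using s1 by (simp add: algebra_simps)
    then show ?thesis by (simp add: algebra_simps)
  qed
  have e2: "((real x - 1) * (real x + 1)) ^ x = (real (x - 1) ^ (x - 1) * real (x + 1) ^ x) * (real x - 1)"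
  proof -
    obtain y where y: "x = Suc y" using x2 by (cases x) auto
    have r: "real (x - 1) = real x - 1" using x2 by (simp add: of_nat_diff)
    have t1: "(real x - 1) ^ x = (real x - 1) ^ (x - 1) * (real x - 1)" unfolding y by (simp add: power_Suc2)
    have "((real x - 1) * (real x + 1)) ^ x = (real x - 1) ^ x * (real x + 1) ^ x" by (rule power_mult_distrib)
    also have "\<dots> = (real (x - 1) ^ (x - 1) * real (x + 1) ^ x) * (real x - 1)" unfolding t1 r by (simp add: add.commute)
    finally show ?thesis .
  qed
  have "(real x ^ x * real x ^ (x - 1)) * (real x - 1) \<le> (real (x - 1) ^ (x - 1) * real (x + 1) ^ x) * (real x - 1)"
    using I unfolding e1 e2 .
  moreover have "real x - 1 > 0" using x2 by simp
  ultimately show ?thesis by simp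
qed

definition hh :: "nat \<Rightarrow> real" where "hh x = real (x - 1) ^ (x - 1) / real x ^ (x - 1)"

lemma hh_step: "x \<ge> 1 \<Longrightarrow> hh (Suc x) \<le> hh x"
proof -
  assume x: "x \<ge> 1"
  have p1: "real x ^ (x - 1) > 0" "real (Suc x) ^ x > 0" using x by auto
  have "real x ^ x / real (Suc x) ^ x \<le> real (x - 1) ^ (x - 1) / real x ^ (x - 1)"
    using step_ineq[OF x] p1 by (simp add: divide_simps mult.commute)
  then show ?thesis by (simp add: hh_def)
qed

lemma hh_mono: assumes "l \<ge> 1" "l \<le> k" shows "hh k \<le> hh l"
  using assms(2)
proof (induction k rule: dec_induct)
  case base then show ?case by simp
next
  case (step n)
  then show ?case using hh_step[of n] assms(1) by simp
qed

lemma coef_ineq: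
  assumes "l \<ge> 1" "l \<le> k"
  shows "real k * (real (k - 1) ^ (k - 1) * real l ^ l) \<le> real l * (real k ^ k * real (l - 1) ^ (l - 1))"
proof -
  have k1: "k \<ge> 1" using assms by simp
  have kk: "real k ^ k = real k * real k ^ (k - 1)" using k1 by (metis Suc_diff_1 le_less_trans zero_less_one power_Suc le_less)
  have ll: "real l ^ l = real l * real l ^ (l - 1)" using assms(1) by (metis Suc_diff_1 le_less_trans zero_less_one power_Suc le_less)
  have pk: "real k ^ (k - 1) > 0" and pl: "real l ^ (l - 1) > 0" using assms k1 by auto
  have "hh k \<le> hh l" by (rule hh_mono[OF assms(1) assms(2)])
  then have "real (k - 1) ^ (k - 1) * real l ^ (l - 1) \<le> real (l - 1) ^ (l - 1) * real k ^ (k - 1)"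
    using pk pl by (simp add: hh_def divide_simps)
  then have "real k * real l * (real (k - 1) ^ (k - 1) * real l ^ (l - 1)) \<le> real k * real l * (real (l - 1) ^ (l - 1) * real k ^ (k - 1))"
    by (rule mult_left_mono) simp
  then show ?thesis by (simp add: kk ll algebra_simps)
qed



lemma pow_aux: assumes "(n::real) \<ge> 2" "j \<ge> 1" shows "n * (n - 2) ^ j \<le> (n - 1) ^ (j + 1)"
  using assms(2)
proof (induction j rule: dec_induct)
  case base then show ?case by (simp add: power2_eq_square algebra_simps)
next
  case (step j)
  have "n * (n - 2) ^ Suc j = (n * (n - 2) ^ j) * (n - 2)" by (simp add: algebra_simps)
  also have "\<dots> \<le> (n - 1) ^ (j + 1) * (n - 2)" by (rule mult_right_mono[OF step.IH]) (use assms(1) in simp)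
  also have "\<dots> \<le> (n - 1) ^ (j + 1) * (n - 1)" by (rule mult_left_mono) (use assms(1) in simp_all)
  finally show ?case by (simp add: algebra_simps)
qed

lemma final_real:
  fixes n d Num Den L0 L1 :: real and m :: nat
  assumes n1: "n \<ge> 1" and d0: "d \<ge> 0" and dn: "d \<le> n - 1" and m2: "m \<ge> 2"
    and L0: "L0 \<ge> 0" and L1: "L1 \<ge> 0"
    and Nn: "Num \<ge> 0" and ND: "Num \<le> Den" and Dlow: "Den \<ge> (m + 1) * (n - 1) ^ m"
    and Nup: "Num \<le> L0 * (max 0 (d - 1)) ^ m + d * L1 * (max 0 (n - d - 2)) ^ (m - 1)"
  shows "Num / Den \<le> 1 / (m + 1) * (L0 * (d / n) ^ m + L1 * (d / n) * (1 - d / n) ^ (m - 1))"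
proof -
  have npos: "n > 0" using n1 by simp
  define X where "X = L0 * d ^ m + L1 * d * (n - d) ^ (m - 1)"
  have Xnn: "X \<ge> 0" using L0 L1 d0 dn by (simp add: X_def)
  have rhs: "1 / (m + 1) * (L0 * (d / n) ^ m + L1 * (d / n) * (1 - d / n) ^ (m - 1)) = X / ((m + 1) * n ^ m)"
  proof -
    have "1 - d / n = (n - d) / n" using npos by (simp add: field_simps)
    moreover have "n ^ m = n * n ^ (m - 1)" using m2 by (metis Suc_diff_1 le_less_trans zero_less_two pos2 power_Suc le_less)
    ultimately show ?thesis using npos unfolding X_def by (simp add: power_divide field_simps)
  qed
  show ?thesis
  proof (cases "Num = 0")
    case True
    then show ?thesis unfolding rhs using Xnn npos by simp
  next
    case False
    then have Npos: "Num > 0" using Nn by simp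
    define D0 where "D0 = max 0 (d - 1)"
    define W where "W = max 0 (n - d - 2)"
    have D0nn: "D0 \<ge> 0" and Wnn: "W \<ge> 0" by (simp_all add: D0_def W_def)
    have n1': "n > 1"
    proof (rule ccontr)
      assume "\<not> n > 1"
      then have e: "D0 = 0" "W = 0" using dn d0 by (auto simp: D0_def W_def)
      have z: "(0::real) ^ m = 0" "(0::real) ^ (m - 1) = 0" using m2 by simp_all
      have N2: "Num \<le> L0 * D0 ^ m + d * L1 * W ^ (m - 1)" using Nup by (simp add: D0_def W_def)
      then have "Num \<le> 0" unfolding e z by simp
      then show False using Npos by simp
    qed
    have nm1: "(n - 1) ^ m > 0" using n1' by simp
    have a: "n ^ m * D0 ^ m \<le> (n - 1) ^ m * d ^ m"
    proof -
      have "n * D0 \<le> (n - 1) * d"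
      proof (cases "d \<ge> 1")
        case True
        then have e: "D0 = d - 1" by (simp add: D0_def)
        have "n * (d - 1) - (n - 1) * d = d - n" by (simp add: algebra_simps)
        then show ?thesis unfolding e using dn by linarith
      next
        case False
        then have "D0 = 0" by (simp add: D0_def)
        then show ?thesis using dn d0 n1 by simp
      qed
      then have "(n * D0) ^ m \<le> ((n - 1) * d) ^ m" by (rule power_mono) (use npos D0nn in simp)
      then show ?thesis by (simp add: power_mult_distrib)
    qed
    have b: "n ^ m * W ^ (m - 1) \<le> (n - 1) ^ m * (n - d) ^ (m - 1)"
    proof (cases "W = 0")
      case True
      have z: "W ^ (m - 1) = 0" unfolding True using m2 by simp
      have "0 \<le> (n - 1) ^ m * (n - d) ^ (m - 1)" using n1' dn by simp
      then show ?thesis unfolding z by simp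
    next
      case False
      then have W: "W = n - d - 2" "n - d - 2 > 0" by (auto simp: W_def)
      then have n2: "n \<ge> 2" using d0 by simp
      have "(n - 2) * (n - d) - n * (n - d - 2) = 2 * d" by (simp add: algebra_simps)
      then have "n * W \<le> (n - 2) * (n - d)" unfolding W(1) using d0 by linarith
      then have "(n * W) ^ (m - 1) \<le> ((n - 2) * (n - d)) ^ (m - 1)" by (rule power_mono) (use npos Wnn in simp)
      then have c1: "n ^ (m - 1) * W ^ (m - 1) \<le> (n - 2) ^ (m - 1) * (n - d) ^ (m - 1)" by (simp add: power_mult_distrib)
      have c2: "n * (n - 2) ^ (m - 1) \<le> (n - 1) ^ m"
        using pow_aux[OF n2, of "m - 1"] m2 by simp
      have "n ^ m * W ^ (m - 1) = n * (n ^ (m - 1) * W ^ (m - 1))"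
        using m2 by (metis (no_types, lifting) Suc_diff_1 le_less_trans mult.assoc zero_less_two pos2 power_Suc le_less)
      also have "\<dots> \<le> n * ((n - 2) ^ (m - 1) * (n - d) ^ (m - 1))" by (rule mult_left_mono[OF c1]) (use npos in simp)
      also have "\<dots> = (n * (n - 2) ^ (m - 1)) * (n - d) ^ (m - 1)" by simp
      also have "\<dots> \<le> (n - 1) ^ m * (n - d) ^ (m - 1)" by (rule mult_right_mono[OF c2]) (use dn in simp)
      finally show ?thesis .
    qed
    have key: "Num * n ^ m \<le> X * (n - 1) ^ m"
    proof -
      have "Num * n ^ m \<le> (L0 * D0 ^ m + d * L1 * W ^ (m - 1)) * n ^ m"
        by (rule mult_right_mono) (use Nup npos in \<open>simp_all add: D0_def W_def\<close>)
      also have "\<dots> = L0 * (n ^ m * D0 ^ m) + d * L1 * (n ^ m * W ^ (m - 1))" by (simp add: algebra_simps)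
      also have "\<dots> \<le> L0 * ((n - 1) ^ m * d ^ m) + d * L1 * ((n - 1) ^ m * (n - d) ^ (m - 1))"
        by (intro add_mono mult_left_mono a b) (use L0 L1 d0 in simp_all)
      also have "\<dots> = X * (n - 1) ^ m" by (simp add: X_def algebra_simps)
      finally show ?thesis .
    qed
    have Dpos: "Den > 0" using Npos ND by simp
    have "Num / Den \<le> Num / ((m + 1) * (n - 1) ^ m)"
      by (rule divide_left_mono[OF Dlow]) (use Nn nm1 Dpos in simp_all)
    also have "\<dots> \<le> X / ((m + 1) * n ^ m)"
      using key nm1 npos by (simp add: divide_simps mult.commute mult.left_commute)
    finally show ?thesis unfolding rhs .
  qed
qed



lemma den_bound:
  assumes fin: "finite V" and v: "v \<in> V"
  shows "(k + l + 1) * (card V - 1) ^ (k + l) \<le> card {\<phi> \<in> star_maps k l V. v \<in> \<phi> ` star_verts k l}"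
proof -
  let ?S = "star_verts k l"
  define E where "E x = PiE ?S (\<lambda>y. if y = x then {v} else V - {v})" for x
  have finS: "finite ?S" by (simp add: star_verts_def)
  have cS: "card ?S = k + l + 1" by (simp add: star_verts_def)
  have finE: "finite (E x)" for x unfolding E_def using fin finS by (intro finite_PiE) auto
  have cE: "card (E x) = (card V - 1) ^ (k + l)" if x: "x \<in> ?S" for x
  proof -
    have "card (E x) = (\<Prod>y\<in>?S. card (if y = x then {v} else V - {v}))"
      unfolding E_def using finS by (rule card_PiE)
    also have "\<dots> = card (if x = x then {v} else V - {v}) * (\<Prod>y\<in>?S - {x}. card (if y = x then {v} else V - {v}))"
      using finS x by (rule prod.remove)
    also have "(\<Prod>y\<in>?S - {x}. card (if y = x then {v} else V - {v})) = (\<Prod>y\<in>?S - {x}. card V - 1)"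
      using fin v by (intro prod.cong) auto
    also have "\<dots> = (card V - 1) ^ (k + l)" using finS x cS by simp
    finally show ?thesis by simp
  qed
  have sub: "(\<Union>x\<in>?S. E x) \<subseteq> {\<phi> \<in> star_maps k l V. v \<in> \<phi> ` ?S}"
  proof
    fix \<phi> assume "\<phi> \<in> (\<Union>x\<in>?S. E x)"
    then obtain x where x: "x \<in> ?S" "\<phi> \<in> E x" by auto
    then have "\<phi> x = v" unfolding E_def by (auto dest: PiE_mem)
    moreover have "\<phi> \<in> star_maps k l V" using x v unfolding E_def star_maps_def by (auto simp: PiE_iff split: if_splits; metis DiffD1 singletonD)
    ultimately show "\<phi> \<in> {\<phi> \<in> star_maps k l V. v \<in> \<phi> ` ?S}" using x by force
  qed
  have disj: "E x \<inter> E y = {}" if "x \<in> ?S" "y \<in> ?S" "x \<noteq> y" for x y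
  proof -
    { fix \<phi> assume "\<phi> \<in> E x" "\<phi> \<in> E y"
      then have "\<phi> x = v" "\<phi> x \<in> V - {v}" using that unfolding E_def by (auto simp: PiE_iff dest: bspec[where x = x])
      then have False by simp }
    then show ?thesis by blast
  qed
  have "card (\<Union>x\<in>?S. E x) = (\<Sum>x\<in>?S. card (E x))"
    using finS finE disj by (intro card_UN_disjoint) auto
  also have "\<dots> = (k + l + 1) * (card V - 1) ^ (k + l)" using cE cS by simp
  finally have e: "card (\<Union>x\<in>?S. E x) = (k + l + 1) * (card V - 1) ^ (k + l)" .
  have finT: "finite {\<phi> \<in> star_maps k l V. v \<in> \<phi> ` ?S}"
    unfolding star_maps_def using fin finS by (intro finite_subset[OF _ finite_PiE[of ?S "\<lambda>_. V"]]) auto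
  show ?thesis using card_mono[OF finT sub] e by simp
qed



lemma star_mapsD:
  assumes "\<phi> \<in> star_maps k l V"
  shows "\<And>z. z \<le> k + l \<Longrightarrow> \<phi> z \<in> V" "\<And>z. \<not> z \<le> k + l \<Longrightarrow> \<phi> z = undefined"
  using assms unfolding star_maps_def star_verts_def by (auto simp: PiE_iff extensional_def)

lemma copyD:
  assumes "is_star_copy Arc k l \<phi>" "a \<le> k + l" "b \<le> k + l"
  shows "Arc (\<phi> a) (\<phi> b) \<longleftrightarrow> star_arc k l a b"
  using assms unfolding is_star_copy_def star_verts_def by auto

lemma copy_inj:
  assumes "is_star_copy Arc k l \<phi>"
  shows "inj_on \<phi> {0..k + l}"
  using assms unfolding is_star_copy_def star_verts_def by auto

lemma finite_star_maps: "finite V \<Longrightarrow> finite (star_maps k l V)"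
  unfolding star_maps_def star_verts_def by (intro finite_PiE) auto

lemma center_count:
  assumes dg: "digraph V Arc" and v: "v \<in> V" and kl: "k + l \<ge> 4"
  shows "real (card {\<phi> \<in> star_maps k l V. is_star_copy Arc k l \<phi> \<and> \<phi> 0 = v})
     \<le> lambda0 k l * (max 0 (real (card {u \<in> V. Arc u v \<or> Arc v u}) - 1)) ^ (k + l)"
proof -
  have fin: "finite V" using dg by (simp add: digraph_def)
  define A where "A = {u \<in> V. Arc v u \<and> \<not> Arc u v}"
  define B where "B = {u \<in> V. Arc u v \<and> \<not> Arc v u}"
  define N where "N = {u \<in> V. Arc u v \<or> Arc v u}"
  define S where "S = {\<phi> \<in> star_maps k l V. is_star_copy Arc k l \<phi> \<and> \<phi> 0 = v}"
  have finA: "finite A" "finite B" "finite N" using fin by (auto simp: A_def B_def N_def)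
  have cAB: "card A + card B \<le> card N"
  proof -
    have "card A + card B = card (A \<union> B)" using finA by (intro card_Un_disjoint[symmetric]) (auto simp: A_def B_def)
    also have "\<dots> \<le> card N" using finA by (intro card_mono) (auto simp: A_def B_def N_def)
    finally show ?thesis .
  qed
  have cnt: "card S \<le> ff (card A) (card {1..k}) * ff (card B) (card {k+1..k+l})"
  proof (rule count_gen[where h = "\<lambda>z. if z = 0 then v else undefined"])
    fix \<phi> assume "\<phi> \<in> S"
    then have m: "\<phi> \<in> star_maps k l V" and c: "is_star_copy Arc k l \<phi>" and v0: "\<phi> 0 = v" by (auto simp: S_def)
    have inj: "inj_on \<phi> {0..k + l}" by (rule copy_inj[OF c])
    show "(\<forall>z. z \<notin> {1..k} \<union> {k+1..k+l} \<longrightarrow> \<phi> z = (if z = 0 then v else undefined)) \<and>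
        inj_on \<phi> ({1..k} \<union> {k+1..k+l}) \<and> \<phi> ` {1..k} \<subseteq> A \<and> \<phi> ` {k+1..k+l} \<subseteq> B"
    proof (intro conjI allI impI subsetI)
      fix z assume "z \<notin> {1..k} \<union> {k+1..k+l}"
      then have "z = 0 \<or> \<not> z \<le> k + l" by auto
      then show "\<phi> z = (if z = 0 then v else undefined)" using v0 star_mapsD(2)[OF m] by auto
    next
      show "inj_on \<phi> ({1..k} \<union> {k+1..k+l})" by (rule inj_on_subset[OF inj]) auto
    next
      fix u assume "u \<in> \<phi> ` {1..k}"
      then obtain y where y: "y \<in> {1..k}" "u = \<phi> y" by auto
      have "Arc (\<phi> 0) (\<phi> y)" using copyD[OF c, of 0 y] y by (auto simp: star_arc_def)
      moreover have "\<not> Arc (\<phi> y) (\<phi> 0)" using copyD[OF c, of y 0] y by (auto simp: star_arc_def)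
      moreover have "\<phi> y \<in> V" using star_mapsD(1)[OF m, of y] y by auto
      ultimately show "u \<in> A" using y v0 by (simp add: A_def)
    next
      fix u assume "u \<in> \<phi> ` {k+1..k+l}"
      then obtain y where y: "y \<in> {k+1..k+l}" "u = \<phi> y" by auto
      have "Arc (\<phi> y) (\<phi> 0)" using copyD[OF c, of y 0] y by (auto simp: star_arc_def)
      moreover have "\<not> Arc (\<phi> 0) (\<phi> y)" using copyD[OF c, of 0 y] y by (auto simp: star_arc_def)
      moreover have "\<phi> y \<in> V" using star_mapsD(1)[OF m, of y] y by auto
      ultimately show "u \<in> B" using y v0 by (simp add: B_def)
    qed
  qed (use finA in auto)
  then have "card S \<le> ff (card A) k * ff (card B) l" by simp
  then have cnt': "real (card S) \<le> real (ff (card A) k * ff (card B) l)" by (simp only: of_nat_le_iff)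
  also have "\<dots> \<le> lambda0 k l * (max 0 (real (card N) - 1)) ^ (k + l)"
    unfolding lambda0_def
    by (rule ff_bound[OF kl]) (use cAB in auto)
  finally show ?thesis by (simp add: S_def N_def)
qed

lemma non_card:
  assumes dg: "digraph V Arc" and v: "v \<in> V"
  shows "card {u \<in> V. \<not> Arc u v \<and> \<not> Arc v u \<and> u \<noteq> v} + card {u \<in> V. Arc u v \<or> Arc v u} + 1 = card V"
proof -
  have fin: "finite V" and nl: "\<And>x. \<not> Arc x x" using dg by (auto simp: digraph_def)
  let ?Non = "{u \<in> V. \<not> Arc u v \<and> \<not> Arc v u \<and> u \<noteq> v}"
  let ?N = "{u \<in> V. Arc u v \<or> Arc v u}"
  have vN: "v \<notin> ?N" using nl by auto
  have "V = ?Non \<union> insert v ?N" using v by auto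
  then have "card V = card (?Non \<union> insert v ?N)" by simp
  also have "\<dots> = card ?Non + card (insert v ?N)" using fin by (intro card_Un_disjoint) auto
  also have "card (insert v ?N) = card ?N + 1" using fin vN by simp
  finally show ?thesis by simp
qed

lemma out_leaf_count:
  assumes dg: "digraph V Arc" and v: "v \<in> V" and x: "1 \<le> x" "x \<le> k" and kl: "k - 1 + l \<ge> 4"
  shows "real (card {\<phi> \<in> star_maps k l V. is_star_copy Arc k l \<phi> \<and> \<phi> x = v})
     \<le> real (card {u \<in> V. Arc u v \<and> \<not> Arc v u}) *
        (real (k - 1) ^ (k - 1) * real l ^ l / real (k - 1 + l) ^ (k - 1 + l) *
         (max 0 (real (card V) - real (card {u \<in> V. Arc u v \<or> Arc v u}) - 2)) ^ (k - 1 + l))"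
proof -
  have fin: "finite V" and nl: "\<And>x. \<not> Arc x x" using dg by (auto simp: digraph_def)
  define B where "B = {u \<in> V. Arc u v \<and> \<not> Arc v u}"
  define N where "N = {u \<in> V. Arc u v \<or> Arc v u}"
  define Non where "Non = {u \<in> V. \<not> Arc u v \<and> \<not> Arc v u \<and> u \<noteq> v}"
  define OC where "OC c = {u \<in> Non. Arc c u \<and> \<not> Arc u c}" for c
  define IC where "IC c = {u \<in> Non. Arc u c \<and> \<not> Arc c u}" for c
  define W where "W = max 0 (real (card V) - real (card N) - 2)"
  define cO where "cO = real (k - 1) ^ (k - 1) * real l ^ l / real (k - 1 + l) ^ (k - 1 + l)"
  define Sx where "Sx = {\<phi> \<in> star_maps k l V. is_star_copy Arc k l \<phi> \<and> \<phi> x = v}"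
  define T where "T c = {\<phi> \<in> Sx. \<phi> 0 = c}" for c
  have finB: "finite B" using fin by (simp add: B_def)
  have finNon: "finite Non" using fin by (simp add: Non_def)
  have cNon: "card Non + card N + 1 = card V" unfolding Non_def N_def by (rule non_card[OF dg v])
  have finSx: "finite Sx" unfolding Sx_def using finite_star_maps[OF fin, of k l] by simp
  have sub: "Sx \<subseteq> (\<Union>c\<in>B. T c)"
  proof
    fix \<phi> assume p: "\<phi> \<in> Sx"
    then have m: "\<phi> \<in> star_maps k l V" and c: "is_star_copy Arc k l \<phi>" and vx: "\<phi> x = v" by (auto simp: Sx_def)
    have "Arc (\<phi> 0) (\<phi> x)" using copyD[OF c, of 0 x] x by (auto simp: star_arc_def)
    moreover have "\<not> Arc (\<phi> x) (\<phi> 0)" using copyD[OF c, of x 0] x by (auto simp: star_arc_def)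
    moreover have "\<phi> 0 \<in> V" using star_mapsD(1)[OF m, of 0] by auto
    ultimately have "\<phi> 0 \<in> B" using vx by (simp add: B_def)
    then show "\<phi> \<in> (\<Union>c\<in>B. T c)" using p by (auto simp: T_def)
  qed
  have Tc: "real (card (T c)) \<le> cO * W ^ (k - 1 + l)" if cB: "c \<in> B" for c
  proof -
    have cnt: "card (T c) \<le> ff (card (OC c)) (card ({1..k} - {x})) * ff (card (IC c)) (card {k+1..k+l})"
    proof (rule count_gen[where h = "\<lambda>z. if z = 0 then c else if z = x then v else undefined"])
      fix \<phi> assume "\<phi> \<in> T c"
      then have m: "\<phi> \<in> star_maps k l V" and cp: "is_star_copy Arc k l \<phi>" and vx: "\<phi> x = v" and c0: "\<phi> 0 = c"
        by (auto simp: T_def Sx_def)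
      have inj: "inj_on \<phi> {0..k + l}" by (rule copy_inj[OF cp])
      show "(\<forall>z. z \<notin> ({1..k} - {x}) \<union> {k+1..k+l} \<longrightarrow> \<phi> z = (if z = 0 then c else if z = x then v else undefined)) \<and>
          inj_on \<phi> (({1..k} - {x}) \<union> {k+1..k+l}) \<and> \<phi> ` ({1..k} - {x}) \<subseteq> OC c \<and> \<phi> ` {k+1..k+l} \<subseteq> IC c"
      proof (intro conjI allI impI subsetI)
        fix z assume "z \<notin> ({1..k} - {x}) \<union> {k+1..k+l}"
        then have "z = 0 \<or> z = x \<or> \<not> z \<le> k + l" by auto
        then show "\<phi> z = (if z = 0 then c else if z = x then v else undefined)" using vx c0 x star_mapsD(2)[OF m] by auto
      next
        show "inj_on \<phi> (({1..k} - {x}) \<union> {k+1..k+l})" by (rule inj_on_subset[OF inj]) auto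
      next
        fix u assume "u \<in> \<phi> ` ({1..k} - {x})"
        then obtain y where y0: "y \<in> {1..k} - {x}" "u = \<phi> y" by blast
        then have y: "y \<in> {1..k}" "y \<noteq> x" "u = \<phi> y" by auto
        have "Arc (\<phi> 0) (\<phi> y)" using copyD[OF cp, of 0 y] y by (auto simp: star_arc_def)
        moreover have "\<not> Arc (\<phi> y) (\<phi> 0)" using copyD[OF cp, of y 0] y by (auto simp: star_arc_def)
        moreover have "\<not> Arc (\<phi> y) (\<phi> x)" using copyD[OF cp, of y x] y x by (auto simp: star_arc_def)
        moreover have "\<not> Arc (\<phi> x) (\<phi> y)" using copyD[OF cp, of x y] y x by (auto simp: star_arc_def)
        moreover have "\<phi> y \<noteq> \<phi> x" using inj_onD[OF inj, of y x] y x by auto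
        moreover have "\<phi> y \<in> V" using star_mapsD(1)[OF m, of y] y by auto
        ultimately show "u \<in> OC c" using y vx c0 by (simp add: OC_def Non_def)
      next
        fix u assume "u \<in> \<phi> ` {k+1..k+l}"
        then obtain y where y: "y \<in> {k+1..k+l}" "u = \<phi> y" by auto
        have "Arc (\<phi> y) (\<phi> 0)" using copyD[OF cp, of y 0] y by (auto simp: star_arc_def)
        moreover have "\<not> Arc (\<phi> 0) (\<phi> y)" using copyD[OF cp, of 0 y] y by (auto simp: star_arc_def)
        moreover have "\<not> Arc (\<phi> y) (\<phi> x)" using copyD[OF cp, of y x] y x by (auto simp: star_arc_def)
        moreover have "\<not> Arc (\<phi> x) (\<phi> y)" using copyD[OF cp, of x y] y x by (auto simp: star_arc_def)
        moreover have "\<phi> y \<noteq> \<phi> x" using inj_onD[OF inj, of y x] y x by auto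
        moreover have "\<phi> y \<in> V" using star_mapsD(1)[OF m, of y] y by auto
        ultimately show "u \<in> IC c" using y vx c0 by (simp add: IC_def Non_def)
      qed
    qed (use finNon in \<open>auto simp: OC_def IC_def\<close>)
    have ck: "card ({1..k} - {x}) = k - 1" using x by simp
    have cOI: "card (OC c) + card (IC c) \<le> card Non"
    proof -
      have "card (OC c) + card (IC c) = card (OC c \<union> IC c)" using finNon
        by (intro card_Un_disjoint[symmetric]) (auto simp: OC_def IC_def)
      also have "\<dots> \<le> card Non" using finNon by (intro card_mono) (auto simp: OC_def IC_def)
      finally show ?thesis .
    qed
    have "card (T c) \<le> ff (card (OC c)) (k - 1) * ff (card (IC c)) l" using cnt ck by simp
    then have "real (card (T c)) \<le> real (ff (card (OC c)) (k - 1) * ff (card (IC c)) l)" by (simp only: of_nat_le_iff)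
    also have "\<dots> \<le> cO * W ^ (k - 1 + l)"
      unfolding cO_def
    proof (rule ff_bound[OF kl])
      show "0 \<le> W" by (simp add: W_def)
      have "real (card (OC c)) + real (card (IC c)) \<le> real (card Non)" using cOI by linarith
      moreover have "real (card Non) = real (card V) - real (card N) - 1" using cNon by linarith
      ultimately show "real (card (OC c)) + real (card (IC c)) - 1 \<le> W" unfolding W_def by linarith
    qed
    finally show ?thesis .
  qed
  have "card Sx \<le> card (\<Union>c\<in>B. T c)"
    by (rule card_mono[OF _ sub]) (use finB finSx in \<open>auto simp: T_def\<close>)
  also have "\<dots> \<le> (\<Sum>c\<in>B. card (T c))" by (rule card_UN_le[OF finB])
  finally have "real (card Sx) \<le> real (\<Sum>c\<in>B. card (T c))" by (simp only: of_nat_le_iff)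
  also have "\<dots> = (\<Sum>c\<in>B. real (card (T c)))" by simp
  also have "\<dots> \<le> (\<Sum>c\<in>B. cO * W ^ (k - 1 + l))" by (rule sum_mono) (rule Tc)
  also have "\<dots> = real (card B) * (cO * W ^ (k - 1 + l))" by simp
  finally show ?thesis by (simp add: Sx_def B_def cO_def W_def N_def)
qed

lemma in_leaf_count:
  assumes dg: "digraph V Arc" and v: "v \<in> V" and x: "k + 1 \<le> x" "x \<le> k + l" and kl: "k + (l - 1) \<ge> 4"
  shows "real (card {\<phi> \<in> star_maps k l V. is_star_copy Arc k l \<phi> \<and> \<phi> x = v})
     \<le> real (card {u \<in> V. Arc v u \<and> \<not> Arc u v}) *
        (real k ^ k * real (l - 1) ^ (l - 1) / real (k + (l - 1)) ^ (k + (l - 1)) *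
         (max 0 (real (card V) - real (card {u \<in> V. Arc u v \<or> Arc v u}) - 2)) ^ (k + (l - 1)))"
proof -
  have fin: "finite V" and nl: "\<And>x. \<not> Arc x x" using dg by (auto simp: digraph_def)
  define B where "B = {u \<in> V. Arc v u \<and> \<not> Arc u v}"
  define N where "N = {u \<in> V. Arc u v \<or> Arc v u}"
  define Non where "Non = {u \<in> V. \<not> Arc u v \<and> \<not> Arc v u \<and> u \<noteq> v}"
  define OC where "OC c = {u \<in> Non. Arc c u \<and> \<not> Arc u c}" for c
  define IC where "IC c = {u \<in> Non. Arc u c \<and> \<not> Arc c u}" for c
  define W where "W = max 0 (real (card V) - real (card N) - 2)"
  define cO where "cO = real k ^ k * real (l - 1) ^ (l - 1) / real (k + (l - 1)) ^ (k + (l - 1))"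
  define Sx where "Sx = {\<phi> \<in> star_maps k l V. is_star_copy Arc k l \<phi> \<and> \<phi> x = v}"
  define T where "T c = {\<phi> \<in> Sx. \<phi> 0 = c}" for c
  have finB: "finite B" using fin by (simp add: B_def)
  have finNon: "finite Non" using fin by (simp add: Non_def)
  have cNon: "card Non + card N + 1 = card V" unfolding Non_def N_def by (rule non_card[OF dg v])
  have finSx: "finite Sx" unfolding Sx_def using finite_star_maps[OF fin, of k l] by simp
  have sub: "Sx \<subseteq> (\<Union>c\<in>B. T c)"
  proof
    fix \<phi> assume p: "\<phi> \<in> Sx"
    then have m: "\<phi> \<in> star_maps k l V" and c: "is_star_copy Arc k l \<phi>" and vx: "\<phi> x = v" by (auto simp: Sx_def)
    have "Arc (\<phi> x) (\<phi> 0)" using copyD[OF c, of x 0] x by (auto simp: star_arc_def)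
    moreover have "\<not> Arc (\<phi> 0) (\<phi> x)" using copyD[OF c, of 0 x] x by (auto simp: star_arc_def)
    moreover have "\<phi> 0 \<in> V" using star_mapsD(1)[OF m, of 0] by auto
    ultimately have "\<phi> 0 \<in> B" using vx by (simp add: B_def)
    then show "\<phi> \<in> (\<Union>c\<in>B. T c)" using p by (auto simp: T_def)
  qed
  have Tc: "real (card (T c)) \<le> cO * W ^ (k + (l - 1))" if cB: "c \<in> B" for c
  proof -
    have cnt: "card (T c) \<le> ff (card (OC c)) (card {1..k}) * ff (card (IC c)) (card ({k+1..k+l} - {x}))"
    proof (rule count_gen[where h = "\<lambda>z. if z = 0 then c else if z = x then v else undefined"])
      fix \<phi> assume "\<phi> \<in> T c"
      then have m: "\<phi> \<in> star_maps k l V" and cp: "is_star_copy Arc k l \<phi>" and vx: "\<phi> x = v" and c0: "\<phi> 0 = c"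
        by (auto simp: T_def Sx_def)
      have inj: "inj_on \<phi> {0..k + l}" by (rule copy_inj[OF cp])
      show "(\<forall>z. z \<notin> {1..k} \<union> ({k+1..k+l} - {x}) \<longrightarrow> \<phi> z = (if z = 0 then c else if z = x then v else undefined)) \<and>
          inj_on \<phi> ({1..k} \<union> ({k+1..k+l} - {x})) \<and> \<phi> ` {1..k} \<subseteq> OC c \<and> \<phi> ` ({k+1..k+l} - {x}) \<subseteq> IC c"
      proof (intro conjI allI impI subsetI)
        fix z assume "z \<notin> {1..k} \<union> ({k+1..k+l} - {x})"
        then have "z = 0 \<or> z = x \<or> \<not> z \<le> k + l" by auto
        then show "\<phi> z = (if z = 0 then c else if z = x then v else undefined)" using vx c0 x star_mapsD(2)[OF m] by auto
      next
        show "inj_on \<phi> ({1..k} \<union> ({k+1..k+l} - {x}))" by (rule inj_on_subset[OF inj]) auto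
      next
        fix u assume "u \<in> \<phi> ` {1..k}"
        then obtain y where y: "y \<in> {1..k}" "u = \<phi> y" by auto
        have "Arc (\<phi> 0) (\<phi> y)" using copyD[OF cp, of 0 y] y by (auto simp: star_arc_def)
        moreover have "\<not> Arc (\<phi> y) (\<phi> 0)" using copyD[OF cp, of y 0] y by (auto simp: star_arc_def)
        moreover have "\<not> Arc (\<phi> y) (\<phi> x)" using copyD[OF cp, of y x] y x by (auto simp: star_arc_def)
        moreover have "\<not> Arc (\<phi> x) (\<phi> y)" using copyD[OF cp, of x y] y x by (auto simp: star_arc_def)
        moreover have "\<phi> y \<noteq> \<phi> x" using inj_onD[OF inj, of y x] y x by auto
        moreover have "\<phi> y \<in> V" using star_mapsD(1)[OF m, of y] y by auto
        ultimately show "u \<in> OC c" using y vx c0 by (simp add: OC_def Non_def)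
      next
        fix u assume "u \<in> \<phi> ` ({k+1..k+l} - {x})"
        then obtain y where y0: "y \<in> {k+1..k+l} - {x}" "u = \<phi> y" by blast
        then have y: "y \<in> {k+1..k+l}" "y \<noteq> x" "u = \<phi> y" by auto
        have "Arc (\<phi> y) (\<phi> 0)" using copyD[OF cp, of y 0] y by (auto simp: star_arc_def)
        moreover have "\<not> Arc (\<phi> 0) (\<phi> y)" using copyD[OF cp, of 0 y] y by (auto simp: star_arc_def)
        moreover have "\<not> Arc (\<phi> y) (\<phi> x)" using copyD[OF cp, of y x] y x by (auto simp: star_arc_def)
        moreover have "\<not> Arc (\<phi> x) (\<phi> y)" using copyD[OF cp, of x y] y x by (auto simp: star_arc_def)
        moreover have "\<phi> y \<noteq> \<phi> x" using inj_onD[OF inj, of y x] y x by auto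
        moreover have "\<phi> y \<in> V" using star_mapsD(1)[OF m, of y] y by auto
        ultimately show "u \<in> IC c" using y vx c0 by (simp add: IC_def Non_def)
      qed
    qed (use finNon in \<open>auto simp: OC_def IC_def\<close>)
    have ck: "card ({k+1..k+l} - {x}) = l - 1" using x by simp
    have cOI: "card (OC c) + card (IC c) \<le> card Non"
    proof -
      have "card (OC c) + card (IC c) = card (OC c \<union> IC c)" using finNon
        by (intro card_Un_disjoint[symmetric]) (auto simp: OC_def IC_def)
      also have "\<dots> \<le> card Non" using finNon by (intro card_mono) (auto simp: OC_def IC_def)
      finally show ?thesis .
    qed
    have "card (T c) \<le> ff (card (OC c)) k * ff (card (IC c)) (l - 1)" using cnt ck by simp
    then have "real (card (T c)) \<le> real (ff (card (OC c)) k * ff (card (IC c)) (l - 1))" by (simp only: of_nat_le_iff)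
    also have "\<dots> \<le> cO * W ^ (k + (l - 1))"
      unfolding cO_def
    proof (rule ff_bound[OF kl])
      show "0 \<le> W" by (simp add: W_def)
      have "real (card (OC c)) + real (card (IC c)) \<le> real (card Non)" using cOI by linarith
      moreover have "real (card Non) = real (card V) - real (card N) - 1" using cNon by linarith
      ultimately show "real (card (OC c)) + real (card (IC c)) - 1 \<le> W" unfolding W_def by linarith
    qed
    finally show ?thesis .
  qed
  have "card Sx \<le> card (\<Union>c\<in>B. T c)"
    by (rule card_mono[OF _ sub]) (use finB finSx in \<open>auto simp: T_def\<close>)
  also have "\<dots> \<le> (\<Sum>c\<in>B. card (T c))" by (rule card_UN_le[OF finB])
  finally have "real (card Sx) \<le> real (\<Sum>c\<in>B. card (T c))" by (simp only: of_nat_le_iff)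
  also have "\<dots> = (\<Sum>c\<in>B. real (card (T c)))" by simp
  also have "\<dots> \<le> (\<Sum>c\<in>B. cO * W ^ (k + (l - 1)))" by (rule sum_mono) (rule Tc)
  also have "\<dots> = real (card B) * (cO * W ^ (k + (l - 1)))" by simp
  finally show ?thesis by (simp add: Sx_def B_def cO_def W_def N_def)
qed


theorem claim4p1:
  fixes V :: "'a set" and Arc :: "'a \<Rightarrow> 'a \<Rightarrow> bool" and k l :: nat and v :: 'a
  assumes "digraph V Arc"
    and "k \<ge> l" and "l \<ge> 1" and "k + l \<ge> 6"
    and "v \<in> V"
  shows "s_val V Arc k l v \<le>
    1 / real (k + l + 1) *
      (lambda0 k l * rho V Arc v ^ (k + l)
       + lambda1 k l * rho V Arc v * (1 - rho V Arc v) ^ (k + l - 1))"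
proof -
  note dg = assms(1) and v = assms(5)
  have fin: "finite V" using dg by (simp add: digraph_def)
  have k1: "k \<ge> 1" using assms by simp
  define N where "N = {u \<in> V. Arc u v \<or> Arc v u}"
  define A where "A = {u \<in> V. Arc v u \<and> \<not> Arc u v}"
  define B where "B = {u \<in> V. Arc u v \<and> \<not> Arc v u}"
  define NS where "NS = {\<phi> \<in> star_maps k l V. is_star_copy Arc k l \<phi> \<and> v \<in> \<phi> ` star_verts k l}"
  define DS where "DS = {\<phi> \<in> star_maps k l V. v \<in> \<phi> ` star_verts k l}"
  define Sx where "Sx x = {\<phi> \<in> star_maps k l V. is_star_copy Arc k l \<phi> \<and> \<phi> x = v}" for x
  define n where "n = card V"
  define d where "d = card N"
  define W where "W = max 0 (real n - real d - 2)"
  define P where "P = real (k + l - 1) ^ (k + l - 1)"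
  define cO where "cO = real (k - 1) ^ (k - 1) * real l ^ l / P"
  define cI where "cI = real k ^ k * real (l - 1) ^ (l - 1) / P"
  have finSM: "finite (star_maps k l V)" by (rule finite_star_maps[OF fin])
  have finDS: "finite DS" unfolding DS_def using finSM by simp
  have finA: "finite A" "finite B" "finite N" using fin by (auto simp: A_def B_def N_def)
  have cAB: "card A + card B \<le> d"
  proof -
    have "card A + card B = card (A \<union> B)" using finA by (intro card_Un_disjoint[symmetric]) (auto simp: A_def B_def)
    also have "\<dots> \<le> card N" using finA by (intro card_mono) (auto simp: A_def B_def N_def)
    finally show ?thesis by (simp add: d_def)
  qed
  have cNon: "card {u \<in> V. \<not> Arc u v \<and> \<not> Arc v u \<and> u \<noteq> v} + d + 1 = n"
    unfolding d_def N_def n_def by (rule non_card[OF dg v])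
  have NSsub: "NS \<subseteq> (\<Union>x\<in>{0..k+l}. Sx x)"
    by (auto simp: NS_def Sx_def star_verts_def)
  have "card NS \<le> card (\<Union>x\<in>{0..k+l}. Sx x)"
    by (rule card_mono[OF _ NSsub]) (use finSM in \<open>auto simp: Sx_def\<close>)
  also have "\<dots> \<le> (\<Sum>x\<in>{0..k+l}. card (Sx x))" by (rule card_UN_le) simp
  finally have "real (card NS) \<le> real (\<Sum>x\<in>{0..k+l}. card (Sx x))" by (simp only: of_nat_le_iff)
  also have "\<dots> = (\<Sum>x\<in>{0..k+l}. real (card (Sx x)))" by simp
  also have "\<dots> = real (card (Sx 0)) + ((\<Sum>x\<in>{1..k}. real (card (Sx x))) + (\<Sum>x\<in>{k+1..k+l}. real (card (Sx x))))"
  proof -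
    have "(\<Sum>x\<in>{0..k+l}. real (card (Sx x))) = real (card (Sx 0)) + (\<Sum>x\<in>{Suc 0..k+l}. real (card (Sx x)))"
      by (rule sum.atLeast_Suc_atMost) simp
    moreover have "(\<Sum>x\<in>{1..k+l}. real (card (Sx x))) = (\<Sum>x\<in>{1..k}. real (card (Sx x))) + (\<Sum>x\<in>{k+1..k+l}. real (card (Sx x)))"
      by (rule sum.ub_add_nat) simp
    ultimately show ?thesis by simp
  qed
  also have "\<dots> \<le> lambda0 k l * (max 0 (real d - 1)) ^ (k + l) +
      ((\<Sum>x\<in>{1..k}. real (card B) * (cO * W ^ (k + l - 1))) + (\<Sum>x\<in>{k+1..k+l}. real (card A) * (cI * W ^ (k + l - 1))))"
  proof (intro add_mono sum_mono)
    show "real (card (Sx 0)) \<le> lambda0 k l * (max 0 (real d - 1)) ^ (k + l)"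
      using center_count[OF dg v] assms(4) by (simp add: Sx_def d_def N_def)
  next
    fix x assume x: "x \<in> {1..k}"
    have e: "k - 1 + l = k + l - 1" using k1 by simp
    show "real (card (Sx x)) \<le> real (card B) * (cO * W ^ (k + l - 1))"
      using out_leaf_count[OF dg v, of x k l] x assms(4) unfolding e
      by (simp add: Sx_def B_def cO_def P_def W_def n_def d_def N_def)
  next
    fix x assume x: "x \<in> {k+1..k+l}"
    have e: "k + (l - 1) = k + l - 1" using assms(3) by simp
    show "real (card (Sx x)) \<le> real (card A) * (cI * W ^ (k + l - 1))"
      using in_leaf_count[OF dg v, of k x l] x assms(4) unfolding e
      by (simp add: Sx_def A_def cI_def P_def W_def n_def d_def N_def)
  qed
  also have "\<dots> = lambda0 k l * (max 0 (real d - 1)) ^ (k + l) +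
      (real (card B) * (real k * cO) + real (card A) * (real l * cI)) * W ^ (k + l - 1)"
    by (simp add: algebra_simps)
  also have "\<dots> \<le> lambda0 k l * (max 0 (real d - 1)) ^ (k + l) + real d * lambda1 k l * W ^ (k + l - 1)"
  proof -
    have Ppos: "P > 0" using assms by (simp add: P_def)
    have l1: "real l * cI = lambda1 k l" by (simp add: cI_def lambda1_def P_def)
    have kO: "real k * cO \<le> lambda1 k l"
    proof -
      have "real k * (real (k - 1) ^ (k - 1) * real l ^ l) \<le> real l * (real k ^ k * real (l - 1) ^ (l - 1))"
        by (rule coef_ineq) (use assms in auto)
      then have "real k * (real (k - 1) ^ (k - 1) * real l ^ l) / P \<le> real l * (real k ^ k * real (l - 1) ^ (l - 1)) / P"
        by (rule divide_right_mono) (use Ppos in simp)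
      then show ?thesis by (simp add: cO_def lambda1_def P_def mult.assoc mult.left_commute)
    qed
    have L1: "lambda1 k l \<ge> 0" by (simp add: lambda1_def)
    have "real (card B) * (real k * cO) + real (card A) * (real l * cI) \<le> real (card B) * lambda1 k l + real (card A) * lambda1 k l"
      unfolding l1 by (intro add_mono mult_left_mono kO) auto
    also have "\<dots> = real (card A + card B) * lambda1 k l" by (simp add: algebra_simps)
    also have "\<dots> \<le> real d * lambda1 k l" by (rule mult_right_mono) (use cAB L1 in simp_all)
    finally have *: "real (card B) * (real k * cO) + real (card A) * (real l * cI) \<le> real d * lambda1 k l" .
    have "W ^ (k + l - 1) \<ge> 0" by (simp add: W_def)
    with * show ?thesis by (intro add_mono mult_right_mono) auto
  qed
  finally have Nup: "real (card NS) \<le> lambda0 k l * (max 0 (real d - 1)) ^ (k + l) + real d * lambda1 k l * W ^ (k + l - 1)" .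
  have n1: "n \<ge> 1" using fin v by (simp add: n_def Suc_le_eq card_gt_0_iff) (use v in blast)
  have Dlow: "real (k + l + 1) * (real n - 1) ^ (k + l) \<le> real (card DS)"
  proof -
    have "(k + l + 1) * (n - 1) ^ (k + l) \<le> card DS" unfolding DS_def n_def by (rule den_bound[OF fin v])
    then have "real ((k + l + 1) * (n - 1) ^ (k + l)) \<le> real (card DS)" by (simp only: of_nat_le_iff)
    moreover have "real ((k + l + 1) * (n - 1) ^ (k + l)) = real (k + l + 1) * (real n - 1) ^ (k + l)"
      using n1 by (simp only: of_nat_mult of_nat_power of_nat_diff) simp
    ultimately show ?thesis by simp
  qed
  have "NS \<subseteq> DS" by (auto simp: NS_def DS_def)
  then have "card NS \<le> card DS" by (rule card_mono[OF finDS])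
  then have ND: "real (card NS) \<le> real (card DS)" by (simp only: of_nat_le_iff)
  have "real (card NS) / real (card DS) \<le> 1 / real (k + l + 1) *
      (lambda0 k l * (real d / real n) ^ (k + l) + lambda1 k l * (real d / real n) * (1 - real d / real n) ^ (k + l - 1))"
  proof (rule final_real)
    show "1 \<le> real n" using n1 by simp
    show "0 \<le> real d" by simp
    show "real d \<le> real n - 1" using cNon by linarith
    show "2 \<le> k + l" using assms by simp
    show "0 \<le> lambda0 k l" by (simp add: lambda0_def)
    show "0 \<le> lambda1 k l" by (simp add: lambda1_def)
    show "0 \<le> real (card NS)" by simp
    show "real (card NS) \<le> real (card DS)" by (rule ND)
    show "real (k + l + 1) * (real n - 1) ^ (k + l) \<le> real (card DS)" by (rule Dlow)
    show "real (card NS) \<le> lambda0 k l * max 0 (real d - 1) ^ (k + l) + real d * lambda1 k l * max 0 (real n - real d - 2) ^ (k + l - 1)"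
      using Nup by (simp add: W_def)
  qed
  then show ?thesis unfolding s_val_def rho_def NS_def DS_def n_def d_def N_def .
qed


end
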